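(* Let $X,X',Y,Y'$ be integer-valued random variables such that $X'$ and $Y'$ take values in $\{0,1\}$, $X\succeq Y$, and for all $x\in\mathbb{Z}$, $(X'\mid X=x)\succeq(Y'\mid Y=x)$. Then $X+X'\succeq Y+Y'$.
   Context: For real random variables, $X\succeq Y$ ($X$ stochastically dominates $Y$) means $\Pr[X\ge x]\ge\Pr[Y\ge x]$ for all real $x$; $(X'\mid X=x)$ denotes the conditional distribution of $X'$ given $X=x$. *)

theory Defs
  imports "HOL-Probability.Probability"
begin

definition stoch_dom :: "'a measure \<Rightarrow> ('a \<Rightarrow> int) \<Rightarrow> 'b measure \<Rightarrow> ('b \<Rightarrow> int) \<Rightarrow> bool" where
  "stoch_dom M X N Y \<longleftrightarrow>
     (\<forall>t::real. measure M {\<omega> \<in> space M. t \<le> real_of_int (X \<omega>)}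
               \<ge> measure N {\<omega> \<in> space N. t \<le> real_of_int (Y \<omega>)})"

end

theory Submission
  imports Defs
begin

lemma arith_key:
  fixes a a' b b' c c' :: real
  assumes "a' \<le> a" "a' + b' \<le> a + b" "0 \<le> c" "c \<le> b" "0 \<le> c'" "c' \<le> b'"
    and "b > 0 \<and> b' > 0 \<longrightarrow> c' / b' \<le> c / b"
  shows "a' + c' \<le> a + c"
proof (cases "b' = 0")
  case True then show ?thesis using assms by auto
next
  case False
  show ?thesis
  proof (cases "b = 0")
    case True then show ?thesis using assms by auto
  next
    case bF: False
    define p where "p = c / b"
    define q where "q = c' / b'"
    have bp: "b > 0" "b' > 0" using assms False bF by auto
    have c: "c = b * p" "c' = b' * q" using bp by (auto simp: p_def q_def)
    have pq: "q \<le> p" "0 \<le> p" "p \<le> 1" "0 \<le> q" using assms bp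
      by (auto simp: p_def q_def)
    have "a + c - a' - c' = (1-p)*(a-a') + p*((a+b)-(a'+b')) + (p-q)*b'"
      using c by (simp add: algebra_simps)
    also have "\<dots> \<ge> 0" using pq assms bp
      by (intro add_nonneg_nonneg mult_nonneg_nonneg) auto
    finally show ?thesis by simp
  qed
qed

lemma split_sum:
  fixes M :: "'a measure" and X X' :: "'a \<Rightarrow> int" and s :: int
  assumes "prob_space M"
    and [measurable]: "X \<in> measurable M (count_space UNIV)" "X' \<in> measurable M (count_space UNIV)"
    and "\<forall>\<omega>\<in>space M. X' \<omega> \<in> {0, 1}"
  shows "measure M {\<omega> \<in> space M. s \<le> X \<omega> + X' \<omega>} =
     measure M {\<omega> \<in> space M. s \<le> X \<omega>} +
     measure M ({\<omega> \<in> space M. X \<omega> = s - 1} \<inter> {\<omega> \<in> space M. 1 \<le> real_of_int (X' \<omega>)})"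
proof -
  have eq: "{\<omega> \<in> space M. s \<le> X \<omega> + X' \<omega>} = {\<omega> \<in> space M. s \<le> X \<omega>} \<union>
     ({\<omega> \<in> space M. X \<omega> = s - 1} \<inter> {\<omega> \<in> space M. 1 \<le> real_of_int (X' \<omega>)})"
    using assms(4) by force
  have "measure M ({\<omega> \<in> space M. s \<le> X \<omega>} \<union>
     ({\<omega> \<in> space M. X \<omega> = s - 1} \<inter> {\<omega> \<in> space M. 1 \<le> real_of_int (X' \<omega>)})) =
     measure M {\<omega> \<in> space M. s \<le> X \<omega>} +
     measure M ({\<omega> \<in> space M. X \<omega> = s - 1} \<inter> {\<omega> \<in> space M. 1 \<le> real_of_int (X' \<omega>)})"
    by (rule finite_measure.finite_measure_Union)
       (use assms(1) in \<open>auto simp: prob_space_def\<close>)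
  then show ?thesis using eq by simp
qed

lemma cond_meas:
  fixes M :: "'a measure" and X X' :: "'a \<Rightarrow> int" and s :: int
  assumes "prob_space M"
    and [measurable]: "X \<in> measurable M (count_space UNIV)" "X' \<in> measurable M (count_space UNIV)"
    and "measure M {\<omega> \<in> space M. X \<omega> = s} > 0"
  shows "measure (uniform_measure M {\<omega> \<in> space M. X \<omega> = s})
       {\<omega> \<in> space (uniform_measure M {\<omega> \<in> space M. X \<omega> = s}). 1 \<le> real_of_int (X' \<omega>)} =
     measure M ({\<omega> \<in> space M. X \<omega> = s} \<inter> {\<omega> \<in> space M. 1 \<le> real_of_int (X' \<omega>)})
       / measure M {\<omega> \<in> space M. X \<omega> = s}"
proof -
  interpret prob_space M by fact
  have "emeasure M {\<omega> \<in> space M. X \<omega> = s} \<noteq> 0"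
    using assms(4) by (simp add: emeasure_eq_measure)
  then show ?thesis
    by (subst measure_uniform_measure) auto
qed

theorem lemma3p7:
  fixes M :: "'a measure" and N :: "'b measure"
    and X X' :: "'a \<Rightarrow> int" and Y Y' :: "'b \<Rightarrow> int"
  assumes "prob_space M" and "prob_space N"
    and "X \<in> measurable M (count_space UNIV)" and "X' \<in> measurable M (count_space UNIV)"
    and "Y \<in> measurable N (count_space UNIV)" and "Y' \<in> measurable N (count_space UNIV)"
    and "\<forall>\<omega>\<in>space M. X' \<omega> \<in> {0, 1}" and "\<forall>\<omega>\<in>space N. Y' \<omega> \<in> {0, 1}"
    and "stoch_dom M X N Y"
    and "\<forall>x::int. measure M {\<omega> \<in> space M. X \<omega> = x} > 0 \<and> measure N {\<omega> \<in> space N. Y \<omega> = x} > 0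
           \<longrightarrow> stoch_dom (uniform_measure M {\<omega> \<in> space M. X \<omega> = x}) X'
                        (uniform_measure N {\<omega> \<in> space N. Y \<omega> = x}) Y'"
  shows "stoch_dom M (\<lambda>\<omega>. X \<omega> + X' \<omega>) N (\<lambda>\<omega>. Y \<omega> + Y' \<omega>)"
  unfolding stoch_dom_def
proof
  fix t :: real
  define s where "s = ceiling t"
  have ct: "\<And>z::int. (t \<le> real_of_int z) = (s \<le> z)" unfolding s_def
    by (simp add: ceiling_le_iff)
  note [measurable] = assms(3-6)
  interpret M: prob_space M by fact
  interpret N: prob_space N by fact
  define a where "a = measure M {\<omega> \<in> space M. s \<le> X \<omega>}"
  define a' where "a' = measure N {\<omega> \<in> space N. s \<le> Y \<omega>}"
  define b where "b = measure M {\<omega> \<in> space M. X \<omega> = s - 1}"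
  define b' where "b' = measure N {\<omega> \<in> space N. Y \<omega> = s - 1}"
  define c where "c = measure M ({\<omega> \<in> space M. X \<omega> = s - 1} \<inter> {\<omega> \<in> space M. 1 \<le> real_of_int (X' \<omega>)})"
  define c' where "c' = measure N ({\<omega> \<in> space N. Y \<omega> = s - 1} \<inter> {\<omega> \<in> space N. 1 \<le> real_of_int (Y' \<omega>)})"
  have lhs: "measure M {\<omega> \<in> space M. t \<le> real_of_int (X \<omega> + X' \<omega>)} = a + c"
    unfolding ct a_def c_def by (rule split_sum[OF assms(1,3,4,7)])
  have rhs: "measure N {\<omega> \<in> space N. t \<le> real_of_int (Y \<omega> + Y' \<omega>)} = a' + c'"
    unfolding ct a'_def c'_def by (rule split_sum[OF assms(2,5,6,8)])
  have d1: "a' \<le> a"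
    using assms(9) unfolding stoch_dom_def a_def a'_def
    by (erule_tac x="real_of_int s" in allE) simp
  have "{\<omega> \<in> space M. s - 1 \<le> X \<omega>} = {\<omega> \<in> space M. s \<le> X \<omega>} \<union> {\<omega> \<in> space M. X \<omega> = s - 1}"
    by auto
  hence ab: "measure M {\<omega> \<in> space M. s - 1 \<le> X \<omega>} = a + b" unfolding a_def b_def
    by (subst M.finite_measure_Union[symmetric]) auto
  have "{\<omega> \<in> space N. s - 1 \<le> Y \<omega>} = {\<omega> \<in> space N. s \<le> Y \<omega>} \<union> {\<omega> \<in> space N. Y \<omega> = s - 1}"
    by auto
  hence ab': "measure N {\<omega> \<in> space N. s - 1 \<le> Y \<omega>} = a' + b'" unfolding a'_def b'_def
    by (subst N.finite_measure_Union[symmetric]) auto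
  have eqr: "\<And>z::int. (real_of_int s - 1 \<le> real_of_int z) = (s - 1 \<le> z)"
    by linarith
  have d2: "a' + b' \<le> a + b"
    using assms(9) unfolding stoch_dom_def ab[symmetric] ab'[symmetric]
    by (erule_tac x="real_of_int (s - 1)" in allE) (simp add: eqr)
  have c1: "0 \<le> c" "c \<le> b" unfolding c_def b_def
    by (auto intro!: M.finite_measure_mono)
  have c2: "0 \<le> c'" "c' \<le> b'" unfolding c'_def b'_def
    by (auto intro!: N.finite_measure_mono)
  have cond: "b > 0 \<and> b' > 0 \<longrightarrow> c' / b' \<le> c / b"
  proof
    assume h: "b > 0 \<and> b' > 0"
    hence "stoch_dom (uniform_measure M {\<omega> \<in> space M. X \<omega> = s - 1}) X'
                        (uniform_measure N {\<omega> \<in> space N. Y \<omega> = s - 1}) Y'"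
      using assms(10) unfolding b_def b'_def by blast
    hence "measure (uniform_measure N {\<omega> \<in> space N. Y \<omega> = s - 1})
       {\<omega> \<in> space (uniform_measure N {\<omega> \<in> space N. Y \<omega> = s - 1}). 1 \<le> real_of_int (Y' \<omega>)}
       \<le> measure (uniform_measure M {\<omega> \<in> space M. X \<omega> = s - 1})
       {\<omega> \<in> space (uniform_measure M {\<omega> \<in> space M. X \<omega> = s - 1}). 1 \<le> real_of_int (X' \<omega>)}"
      unfolding stoch_dom_def by blast
    then show "c' / b' \<le> c / b"
      unfolding c_def c'_def b_def b'_def
      using cond_meas[OF assms(1,3,4), of "s - 1"] cond_meas[OF assms(2,5,6), of "s - 1"] h
      unfolding b_def b'_def by simp
  qed
  show "measure N {\<omega> \<in> space N. t \<le> real_of_int (Y \<omega> + Y' \<omega>)}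
        \<le> measure M {\<omega> \<in> space M. t \<le> real_of_int (X \<omega> + X' \<omega>)}"
    unfolding lhs rhs by (rule arith_key[OF d1 d2 c1 c2 cond])
qed

end
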